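(* Let $U$ be a uniformly random (Haar-distributed) orthogonal $N\times N$ matrix. Then with probability tending to $1$ as $N\to\infty$ (high probability), $\|U_{S,T}\|<\sqrt{100(|S|+|T|)\ln N/N}$ for all non-empty $S,T\subseteq[N]$; that is, $U$ is good.
   Context: $U_{S,T}$ denotes the submatrix of $U$ with rows in $S$ and columns in $T$, and $\|\cdot\|$ is the operator norm $\|A\|=\sup_{x\ne0}\|Ax\|_2/\|x\|_2$. An orthogonal $N\times N$ matrix is good if every $a\times b$ submatrix $W$ ($a,b\in[N]$) satisfies $\|W\|\le\sqrt{100(a+b)\ln N/N}$. *)

theory Defs
  imports "HOL-Probability.Probability"
begin

text \<open>Real N x N matrices are represented as extensional functions on index pairs
  {..<N} x {..<N} (indices 0..N-1), carrying the product Borel sigma-algebra.\<close>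

definition matrix_space :: "nat \<Rightarrow> (nat \<times> nat \<Rightarrow> real) measure" where
  "matrix_space N = PiM ({..<N} \<times> {..<N}) (\<lambda>_. lborel)"

definition orth_set :: "nat \<Rightarrow> (nat \<times> nat \<Rightarrow> real) set" where
  "orth_set N = {U \<in> ({..<N} \<times> {..<N}) \<rightarrow>\<^sub>E UNIV.
      \<forall>i<N. \<forall>j<N. (\<Sum>k<N. U (k, i) * U (k, j)) = (if i = j then 1 else 0)}"

definition mat_mult :: "nat \<Rightarrow> (nat \<times> nat \<Rightarrow> real) \<Rightarrow> (nat \<times> nat \<Rightarrow> real) \<Rightarrow> (nat \<times> nat \<Rightarrow> real)" where
  "mat_mult N V U = restrict (\<lambda>(i, j). \<Sum>k<N. V (i, k) * U (k, j)) ({..<N} \<times> {..<N})"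

text \<open>Haar probability measure on the orthogonal group O(N): a probability measure on
  N x N matrices concentrated on O(N) and invariant under left multiplication by O(N)
  (this characterizes it uniquely).\<close>

definition haar_orthogonal :: "nat \<Rightarrow> (nat \<times> nat \<Rightarrow> real) measure \<Rightarrow> bool" where
  "haar_orthogonal N M \<longleftrightarrow>
     sets M = sets (matrix_space N) \<and> prob_space M \<and> emeasure M (orth_set N) = 1 \<and>
     (\<forall>V \<in> orth_set N. distr M M (mat_mult N V) = M)"

definition sub_opnorm :: "(nat \<times> nat \<Rightarrow> real) \<Rightarrow> nat set \<Rightarrow> nat set \<Rightarrow> real" where
  "sub_opnorm U S T = Sup {sqrt (\<Sum>i\<in>S. (\<Sum>j\<in>T. U (i, j) * x j)^2) / sqrt (\<Sum>j\<in>T. (x j)^2)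
      | x :: nat \<Rightarrow> real. \<exists>j\<in>T. x j \<noteq> 0}"

end

theory Submission
  imports Defs "HOL-Analysis.L2_Norm"
begin


lemma cosh_bound_nonneg:
  fixes x :: real assumes "x \<ge> 0"
  shows "exp x + exp (-x) \<le> 2 * exp (x^2/2)"
proof -
  have "-(2*x) * (1/2) + ln (1 + (1/2) * (exp (2*x) - 1)) \<le> (2*x)^2/8"
    using Hoeffdings_lemma_aux[of "2*x" "1/2"] assms by simp
  hence "exp (-(2*x) * (1/2) + ln (1 + (1/2) * (exp (2*x) - 1))) \<le> exp ((2*x)^2/8)"
    by simp
  moreover have "1 + (1/2) * (exp (2*x) - 1) > 0"
    proof - have "0 < exp (x*2)" by simp thus ?thesis by (simp add: algebra_simps add_pos_pos) qed
  ultimately have "exp (-x) * (1 + (1/2) * (exp (2*x) - 1)) \<le> exp (x^2/2)"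
  proof -
    assume h1: "exp (-(2*x) * (1/2) + ln (1 + (1/2) * (exp (2*x) - 1))) \<le> exp ((2*x)^2/8)"
       and h2: "1 + (1/2) * (exp (2*x) - 1) > 0"
    have e1: "exp (-(2*x) * (1/2) + ln (1 + (1/2) * (exp (2*x) - 1))) = exp (-x) * (1 + (1/2) * (exp (2*x) - 1))"
      using h2 by (simp add: exp_diff exp_minus field_simps)
    have e2: "(2*x)^2/8 = x^2/2" by (simp add: power2_eq_square)
    show ?thesis using h1 by (simp only: e1 e2)
  qed
  moreover have "exp (-x) * (1 + (1/2) * (exp (2*x) - 1)) = (exp x + exp (-x))/2"
    by (simp add: algebra_simps exp_minus mult_exp_exp[symmetric] field_simps) (simp add: exp_add[symmetric])
  ultimately show ?thesis by simp
qed

lemma cosh_bound: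
  fixes x :: real
  shows "exp x + exp (-x) \<le> 2 * exp (x^2/2)"
proof (cases "x \<ge> 0")
  case True thus ?thesis by (rule cosh_bound_nonneg)
next
  case False
  hence "exp (-x) + exp (-(-x)) \<le> 2 * exp ((-x)^2/2)" by (intro cosh_bound_nonneg) simp
  thus ?thesis by simp
qed

lemma hoeff_count:
  fixes w :: "nat \<Rightarrow> real" and t :: real
  assumes w: "(\<Sum>k<n. (w k)^2) \<le> 1" and t: "t \<ge> 0"
  shows "real (card {e \<in> PiE {..<n} (\<lambda>_. {-1::real,1}). t \<le> (\<Sum>k<n. e k * w k)}) \<le> 2^n * exp (-(t^2)/2)"
proof -
  define E where "E = PiE {..<n} (\<lambda>_. {-1::real,1})"
  define A where "A = {e \<in> E. t \<le> (\<Sum>k<n. e k * w k)}"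
  have fE: "finite E" unfolding E_def by (simp add: finite_PiE)
  have AE: "A \<subseteq> E" unfolding A_def by auto
  have "real (card A) * exp (t^2) = (\<Sum>e\<in>A. exp (t^2))" by simp
  also have "\<dots> \<le> (\<Sum>e\<in>A. exp (t * (\<Sum>k<n. e k * w k)))"
  proof (rule sum_mono)
    fix e assume "e \<in> A"
    hence "t \<le> (\<Sum>k<n. e k * w k)" unfolding A_def by auto
    hence "t * t \<le> t * (\<Sum>k<n. e k * w k)" using t by (intro mult_left_mono) auto
    thus "exp (t^2) \<le> exp (t * (\<Sum>k<n. e k * w k))" by (simp add: power2_eq_square)
  qed
  also have "\<dots> \<le> (\<Sum>e\<in>E. exp (t * (\<Sum>k<n. e k * w k)))"
    by (rule sum_mono2[OF fE AE]) auto
  also have "\<dots> = (\<Sum>e\<in>E. \<Prod>k<n. exp (t * w k * e k))"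
    by (intro sum.cong refl) (simp add: exp_sum sum_distrib_left mult_ac)
  also have "\<dots> = (\<Prod>k<n. \<Sum>y\<in>{-1::real,1}. exp (t * w k * y))"
    unfolding E_def by (rule prod_sum_PiE[symmetric]) auto
  also have "\<dots> = (\<Prod>k<n. exp (t * w k) + exp (-(t * w k)))"
    by (intro prod.cong refl) auto
  also have "\<dots> \<le> (\<Prod>k<n. 2 * exp ((t * w k)^2/2))"
    by (intro prod_mono conjI cosh_bound) (auto intro: add_nonneg_nonneg)
  also have "\<dots> = 2^n * exp (t^2/2 * (\<Sum>k<n. (w k)^2))"
    by (simp add: prod.distrib exp_sum[symmetric] sum_distrib_left power_mult_distrib mult_ac)
  also have "\<dots> \<le> 2^n * exp (t^2/2)"
    using w by (intro mult_left_mono) (auto simp: mult_left_le)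
  finally have "real (card A) * exp (t^2) \<le> 2^n * exp (t^2/2)" .
  hence "real (card A) \<le> 2^n * exp (t^2/2) / exp (t^2)"
    by (simp add: field_simps)
  also have "2^n * exp (t^2/2) / exp (t^2) = 2^n * exp (-(t^2)/2)"
  proof -
    have "exp (t^2) * exp (-(t^2)/2) = exp (t^2/2)" by (simp add: mult_exp_exp)
    thus ?thesis by (simp add: field_simps)
  qed
  finally show ?thesis unfolding A_def E_def .
qed



lemma sum_delta_mult:
  fixes f :: "nat \<Rightarrow> real"
  assumes "j < N"
  shows "(\<Sum>k<N. (if k = j then 1 else 0) * f k) = f j"
proof -
  have "(\<Sum>k<N. (if k = j then 1 else 0) * f k) = (\<Sum>k<N. if k = j then f k else 0)"
    by (rule sum.cong) auto
  also have "\<dots> = f j" using assms by (simp add: sum.delta')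
  finally show ?thesis .
qed

lemma householder:
  fixes y z :: "nat \<Rightarrow> real"
  assumes y1: "(\<Sum>k<N. (y k)^2) = 1" and z1: "(\<Sum>k<N. (z k)^2) = 1"
  shows "\<exists>V \<in> orth_set N. \<forall>k<N. (\<Sum>i<N. y i * V (i, k)) = z k"
proof -
  define u where "u k = y k - z k" for k
  define c where "c = (\<Sum>k<N. (u k)^2)"
  define V where "V = restrict (\<lambda>(i,k). (if i = k then 1 else 0) - 2 * u i * u k / c) ({..<N} \<times> {..<N})"
  have Vij: "V (i,k) = (if i = k then 1 else 0) - 2 * u i * u k / c" if "i < N" "k < N" for i k
    using that unfolding V_def by simp
  have c0: "c = 0 \<Longrightarrow> u k = 0" if "k < N" for k
  proof -
    assume "c = 0"
    hence "\<forall>k\<in>{..<N}. (u k)^2 = 0" unfolding c_def by (subst (asm) sum_nonneg_eq_0_iff) auto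
    thus ?thesis using that by auto
  qed
  have orth: "(\<Sum>k<N. V (k, i) * V (k, j)) = (if i = j then 1 else 0)" if "i < N" "j < N" for i j
  proof -
    have "(\<Sum>k<N. V (k, i) * V (k, j)) =
       (\<Sum>k<N. (if k = i then 1 else 0) * (if k = j then 1 else 0))
       - (\<Sum>k<N. (if k = i then 1 else 0) * (2 * u k * u j / c))
       - (\<Sum>k<N. (if k = j then 1 else 0) * (2 * u k * u i / c))
       + (\<Sum>k<N. (2 * u k * u i / c) * (2 * u k * u j / c))"
    proof -
      have ex: "\<And>a b c d :: real. (a - b) * (c - d) = a * c - a * d - c * b + b * d" by algebra
      have "(\<Sum>k<N. V (k, i) * V (k, j)) = (\<Sum>k<N. (if k = i then 1 else 0) * (if k = j then 1 else 0)
          - (if k = i then 1 else 0) * (2 * u k * u j / c) - (if k = j then 1 else 0) * (2 * u k * u i / c)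
          + (2 * u k * u i / c) * (2 * u k * u j / c))"
        by (rule sum.cong[OF refl]) (simp only: Vij[OF _ that(1)] Vij[OF _ that(2)] lessThan_iff ex)
      thus ?thesis by (simp only: sum.distrib sum_subtractf)
    qed
    also have "(\<Sum>k<N. (if k = i then 1 else 0) * (if k = j then (1::real) else 0)) = (if i = j then 1 else 0)"
      using sum_delta_mult[OF that(1), of "\<lambda>k. if k = j then 1 else 0"] by simp
    also have "(\<Sum>k<N. (if k = i then 1 else 0) * (2 * u k * u j / c)) = 2 * u i * u j / c"
      using sum_delta_mult[OF that(1), of "\<lambda>k. 2 * u k * u j / c"] by simp
    also have "(\<Sum>k<N. (if k = j then 1 else 0) * (2 * u k * u i / c)) = 2 * u i * u j / c"
      using sum_delta_mult[OF that(2), of "\<lambda>k. 2 * u k * u i / c"] by simp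
    also have "(\<Sum>k<N. (2 * u k * u i / c) * (2 * u k * u j / c)) = 4 * u i * u j * c / c^2"
      unfolding c_def by (simp add: sum_distrib_left sum_divide_distrib power2_eq_square mult_ac)
    finally have e: "(\<Sum>k<N. V (k, i) * V (k, j)) = (if i = j then 1 else 0) - 4 * u i * u j / c + 4 * u i * u j * c / c^2"
      by simp
    show ?thesis
    proof (cases "c = 0")
      case True thus ?thesis using e c0 that by simp
    next
      case False thus ?thesis using e by (simp add: power2_eq_square)
    qed
  qed
  have Vorth: "V \<in> orth_set N"
    unfolding orth_set_def using orth by (auto simp: V_def)
  have yV: "(\<Sum>i<N. y i * V (i, k)) = z k" if "k < N" for k
  proof -
    have "(\<Sum>i<N. y i * V (i, k)) = (\<Sum>i<N. y i * (if i = k then 1 else 0)) - 2 * u k * (\<Sum>i<N. y i * u i) / c"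
      using that by (simp add: Vij algebra_simps sum_subtractf sum_distrib_left sum_divide_distrib)
    also have "(\<Sum>i<N. y i * (if i = k then 1 else 0)) = y k"
      using that by (simp add: if_distrib[of "\<lambda>x. _ * x"] sum.delta' cong: if_cong)
    finally have e: "(\<Sum>i<N. y i * V (i, k)) = y k - 2 * u k * (\<Sum>i<N. y i * u i) / c" .
    show ?thesis
    proof (cases "c = 0")
      case True thus ?thesis using e c0[OF that] by (simp add: u_def)
    next
      case False
      have yu: "(\<Sum>i<N. y i * u i) = 1 - (\<Sum>i<N. y i * z i)"
        using y1 by (simp add: u_def algebra_simps sum_subtractf power2_eq_square)
      have cc: "c = 2 - 2 * (\<Sum>i<N. y i * z i)"
        using y1 z1 unfolding c_def u_def
        by (simp add: power2_diff sum.distrib sum_subtractf sum_distrib_left mult_ac)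
      have "2 * (\<Sum>i<N. y i * u i) / c = 1" using False yu cc by simp
      hence "2 * u k * (\<Sum>i<N. y i * u i) / c = u k" by (metis mult.commute mult.right_neutral times_divide_eq_right mult.assoc)
      thus ?thesis using e by (simp add: u_def)
    qed
  qed
  show ?thesis using Vorth yV by blast
qed



lemma space_ms: "space (matrix_space N) = ({..<N} \<times> {..<N}) \<rightarrow>\<^sub>E UNIV"
  by (simp add: matrix_space_def space_PiM)

lemma entry_meas[measurable]: "(\<lambda>U. U ij) \<in> borel_measurable (matrix_space N)"
proof (cases "ij \<in> {..<N} \<times> {..<N}")
  case True
  have "(\<lambda>U. U ij) \<in> measurable (matrix_space N) lborel"
    unfolding matrix_space_def using True by (rule measurable_component_singleton)
  thus ?thesis by simp
next
  case False
  have "(\<lambda>U. undefined) \<in> borel_measurable (matrix_space N)" by simp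
  moreover have "\<And>U. U \<in> space (matrix_space N) \<Longrightarrow> undefined = U ij"
  proof -
    fix U assume "U \<in> space (matrix_space N)"
    moreover obtain a b where ij: "ij = (a, b)" by force
    ultimately show "undefined = U ij" using False by (auto simp: space_ms PiE_def extensional_def)
  qed
  ultimately show ?thesis by (rule measurable_cong[THEN iffD1, rotated])
qed

lemma mat_mult_meas: "mat_mult N V \<in> measurable (matrix_space N) (matrix_space N)"
proof -
  have "(\<lambda>U. \<lambda>ij\<in>{..<N} \<times> {..<N}. (case ij of (i, j) \<Rightarrow> \<Sum>k<N. V (i, k) * U (k, j)))
      \<in> measurable (matrix_space N) (PiM ({..<N} \<times> {..<N}) (\<lambda>_. lborel))"
  proof (rule measurable_restrict)
    fix ij :: "nat \<times> nat"
    obtain i j where ij: "ij = (i, j)" by force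
    show "(\<lambda>U. case ij of (i, j) \<Rightarrow> \<Sum>k<N. V (i, k) * U (k, j)) \<in> measurable (matrix_space N) lborel"
      unfolding ij by simp measurable
  qed
  moreover have "mat_mult N V = (\<lambda>U. \<lambda>ij\<in>{..<N} \<times> {..<N}. (case ij of (i, j) \<Rightarrow> \<Sum>k<N. V (i, k) * U (k, j)))"
    unfolding mat_mult_def by (intro ext) simp
  ultimately show ?thesis by (simp add: matrix_space_def)
qed

lemma haar_sets: "haar_orthogonal N M \<Longrightarrow> sets M = sets (matrix_space N)"
  by (simp add: haar_orthogonal_def)

lemma haar_space: "haar_orthogonal N M \<Longrightarrow> space M = space (matrix_space N)"
  by (rule sets_eq_imp_space_eq) (simp add: haar_orthogonal_def)

lemma haar_prob: "haar_orthogonal N M \<Longrightarrow> prob_space M"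
  by (simp add: haar_orthogonal_def)

lemma haar_orth_sets: "haar_orthogonal N M \<Longrightarrow> orth_set N \<in> sets M"
  by (metis emeasure_notin_sets haar_orthogonal_def zero_neq_one)

lemma haar_AE: "haar_orthogonal N M \<Longrightarrow> AE U in M. U \<in> orth_set N"
proof -
  assume H: "haar_orthogonal N M"
  interpret prob_space M using H by (rule haar_prob)
  have "prob (orth_set N) = 1" using H by (simp add: haar_orthogonal_def measure_def)
  thus ?thesis by (rule AE_prob_1)
qed

lemma bil_mult:
  fixes y x :: "nat \<Rightarrow> real"
  assumes U: "U \<in> space (matrix_space N)"
  shows "(\<Sum>i<N. y i * (\<Sum>j<N. mat_mult N V U (i, j) * x j))
       = (\<Sum>k<N. (\<Sum>i<N. y i * V (i, k)) * (\<Sum>j<N. U (k, j) * x j))"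
proof -
  have "(\<Sum>i<N. y i * (\<Sum>j<N. mat_mult N V U (i, j) * x j))
      = (\<Sum>i<N. y i * (\<Sum>j<N. (\<Sum>k<N. V (i, k) * U (k, j)) * x j))"
    by (intro sum.cong refl) (simp add: mat_mult_def)
  also have "\<dots> = (\<Sum>i<N. \<Sum>j<N. \<Sum>k<N. y i * V (i, k) * U (k, j) * x j)"
    by (simp add: sum_distrib_left sum_distrib_right mult_ac)
  also have "\<dots> = (\<Sum>i<N. \<Sum>k<N. \<Sum>j<N. y i * V (i, k) * U (k, j) * x j)"
    by (rule sum.cong[OF refl], rule sum.swap)
  also have "\<dots> = (\<Sum>k<N. \<Sum>i<N. \<Sum>j<N. y i * V (i, k) * U (k, j) * x j)"
    by (rule sum.swap)
  also have "\<dots> = (\<Sum>k<N. (\<Sum>i<N. y i * V (i, k)) * (\<Sum>j<N. U (k, j) * x j))"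
    by (simp add: sum_distrib_left sum_distrib_right mult_ac)
  finally show ?thesis .
qed

lemma orth_norm:
  fixes x :: "nat \<Rightarrow> real"
  assumes U: "U \<in> orth_set N"
  shows "(\<Sum>i<N. (\<Sum>j<N. U (i, j) * x j)^2) = (\<Sum>j<N. (x j)^2)"
proof -
  have o: "(\<Sum>k<N. U (k, i) * U (k, j)) = (if i = j then 1 else 0)" if "i < N" "j < N" for i j
    using U that unfolding orth_set_def by auto
  have "(\<Sum>i<N. (\<Sum>j<N. U (i, j) * x j)^2) = (\<Sum>i<N. \<Sum>j<N. \<Sum>l<N. U (i, j) * x j * (U (i, l) * x l))"
    by (simp add: power2_eq_square sum_product)
  also have "\<dots> = (\<Sum>j<N. \<Sum>l<N. \<Sum>i<N. U (i, j) * x j * (U (i, l) * x l))"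
  proof -
    have "(\<Sum>i<N. \<Sum>j<N. \<Sum>l<N. U (i, j) * x j * (U (i, l) * x l)) = (\<Sum>j<N. \<Sum>i<N. \<Sum>l<N. U (i, j) * x j * (U (i, l) * x l))"
      by (rule sum.swap)
    also have "\<dots> = (\<Sum>j<N. \<Sum>l<N. \<Sum>i<N. U (i, j) * x j * (U (i, l) * x l))"
      by (rule sum.cong[OF refl], rule sum.swap)
    finally show ?thesis .
  qed
  also have "\<dots> = (\<Sum>j<N. \<Sum>l<N. x j * x l * (\<Sum>i<N. U (i, j) * U (i, l)))"
    by (simp add: sum_distrib_left mult_ac)
  also have "\<dots> = (\<Sum>j<N. \<Sum>l<N. x j * x l * (if j = l then 1 else 0))"
    by (intro sum.cong refl) (simp add: o)
  also have "\<dots> = (\<Sum>j<N. (x j)^2)"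
    by (intro sum.cong refl) (simp add: power2_eq_square if_distrib[of "\<lambda>z. _ * z"] sum.delta cong: if_cong)
  finally show ?thesis .
qed



definition Fset :: "(nat \<times> nat \<Rightarrow> real) measure \<Rightarrow> nat \<Rightarrow> real \<Rightarrow> (nat \<Rightarrow> real) \<Rightarrow> (nat \<Rightarrow> real) \<Rightarrow> (nat \<times> nat \<Rightarrow> real) set" where
  "Fset M N s x y = {U \<in> space M. s \<le> (\<Sum>i<N. y i * (\<Sum>j<N. U (i, j) * x j))}"

lemma Fset_sets:
  assumes H: "haar_orthogonal N M"
  shows "Fset M N s x y \<in> sets M"
proof -
  have "{U \<in> space (matrix_space N). s \<le> (\<Sum>i<N. y i * (\<Sum>j<N. U (i, j) * x j))} \<in> sets (matrix_space N)"
    by measurable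
  thus ?thesis unfolding Fset_def using haar_space[OF H] haar_sets[OF H] by simp
qed

lemma Fset_invariant:
  assumes H: "haar_orthogonal N M"
    and y1: "(\<Sum>k<N. (y k)^2) = 1" and z1: "(\<Sum>k<N. (z k)^2) = 1"
  shows "measure M (Fset M N s x y) = measure M (Fset M N s x z)"
proof -
  obtain V where V: "V \<in> orth_set N" and yV: "\<And>k. k < N \<Longrightarrow> (\<Sum>i<N. y i * V (i, k)) = z k"
    using householder[OF y1 z1] by blast
  define f where "f = mat_mult N V"
  have fm: "f \<in> measurable M M"
    using mat_mult_meas[of N V] haar_sets[OF H] unfolding f_def
    by (simp cong: measurable_cong_sets)
  have d: "distr M M f = M" using H V unfolding haar_orthogonal_def f_def by blast
  have "measure M (Fset M N s x y) = measure (distr M M f) (Fset M N s x y)" using d by simp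
  also have "\<dots> = measure M (f -` Fset M N s x y \<inter> space M)"
    by (rule measure_distr[OF fm Fset_sets[OF H]])
  also have "f -` Fset M N s x y \<inter> space M = Fset M N s x z"
  proof (intro set_eqI iffI)
    fix U assume U: "U \<in> f -` Fset M N s x y \<inter> space M"
    hence Us: "U \<in> space (matrix_space N)" using haar_space[OF H] by simp
    have "s \<le> (\<Sum>i<N. y i * (\<Sum>j<N. f U (i, j) * x j))" using U unfolding Fset_def by simp
    also have "\<dots> = (\<Sum>k<N. z k * (\<Sum>j<N. U (k, j) * x j))"
      unfolding f_def bil_mult[OF Us] by (intro sum.cong refl) (simp add: yV)
    finally show "U \<in> Fset M N s x z" using U unfolding Fset_def by simp
  next
    fix U assume U: "U \<in> Fset M N s x z"
    hence Um: "U \<in> space M" unfolding Fset_def by simp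
    hence Us: "U \<in> space (matrix_space N)" using haar_space[OF H] by simp
    have fU: "f U \<in> space M" using measurable_space[OF fm Um] .
    have "s \<le> (\<Sum>k<N. z k * (\<Sum>j<N. U (k, j) * x j))" using U unfolding Fset_def by simp
    also have "\<dots> = (\<Sum>i<N. y i * (\<Sum>j<N. f U (i, j) * x j))"
      unfolding f_def bil_mult[OF Us] by (intro sum.cong refl) (simp add: yV)
    finally show "U \<in> f -` Fset M N s x y \<inter> space M" using Um fU unfolding Fset_def by simp
  qed
  finally show ?thesis .
qed

lemma tail_unit:
  assumes H: "haar_orthogonal N M" and N: "N > 0"
    and x1: "(\<Sum>k<N. (x k)^2) = 1" and y1: "(\<Sum>k<N. (y k)^2) = 1" and s: "s \<ge> 0"
  shows "measure M (Fset M N s x y) \<le> exp (-(real N * s^2)/2)"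
proof -
  interpret prob_space M using H by (rule haar_prob)
  define E where "E = PiE {..<N} (\<lambda>_. {-1::real,1})"
  define z where "z e k = e k / sqrt (real N)" for e :: "nat \<Rightarrow> real" and k
  have fE: "finite E" unfolding E_def by (simp add: finite_PiE)
  have cE: "card E = 2^N" unfolding E_def by (simp add: card_PiE numeral_2_eq_2)
  have z1: "(\<Sum>k<N. (z e k)^2) = 1" if "e \<in> E" for e
  proof -
    have "(\<Sum>k<N. (z e k)^2) = (\<Sum>k<N. 1 / real N)"
    proof (rule sum.cong[OF refl])
      fix k assume "k \<in> {..<N}"
      hence "e k = -1 \<or> e k = 1" using that unfolding E_def by auto
      hence "(e k)^2 = 1" by auto
      thus "(z e k)^2 = 1 / real N" using N by (simp add: z_def power_divide)
    qed
    thus ?thesis using N by simp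
  qed
  have Fint: "integrable M (indicator (Fset M N s x v) :: _ \<Rightarrow> real)" for v
    by (rule integrable_real_indicator[OF Fset_sets[OF H]]) (simp add: less_top[symmetric])
  have "(\<Sum>e\<in>E. measure M (Fset M N s x (z e))) = (\<Sum>e\<in>E. measure M (Fset M N s x y))"
  proof (rule sum.cong[OF refl])
    fix e assume "e \<in> E"
    show "measure M (Fset M N s x (z e)) = measure M (Fset M N s x y)"
      by (rule Fset_invariant[OF H y1 z1[OF \<open>e \<in> E\<close>], symmetric])
  qed
  hence "real (2^N) * measure M (Fset M N s x y) = (\<Sum>e\<in>E. measure M (Fset M N s x (z e)))"
    using cE by simp
  also have "\<dots> = (\<Sum>e\<in>E. integral\<^sup>L M (indicator (Fset M N s x (z e))))"
  proof (rule sum.cong[OF refl])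
    fix e
    have "Fset M N s x (z e) \<inter> space M = Fset M N s x (z e)" unfolding Fset_def by blast
    thus "measure M (Fset M N s x (z e)) = integral\<^sup>L M (indicator (Fset M N s x (z e)))"
      by simp
  qed
  also have "\<dots> = integral\<^sup>L M (\<lambda>U. \<Sum>e\<in>E. indicator (Fset M N s x (z e)) U)"
    by (rule Bochner_Integration.integral_sum[symmetric]) (rule Fint)
  also have "\<dots> \<le> integral\<^sup>L M (\<lambda>U. 2^N * exp (-(real N * s^2)/2))"
  proof (rule integral_mono_AE)
    show "integrable M (\<lambda>U. \<Sum>e\<in>E. indicator (Fset M N s x (z e)) U :: real)"
      using Fint by simp
    show "integrable M (\<lambda>U. 2^N * exp (-(real N * s^2)/2))" by simp
    show "AE U in M. (\<Sum>e\<in>E. indicator (Fset M N s x (z e)) U) \<le> 2^N * exp (-(real N * s^2)/2)"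
      using haar_AE[OF H]
    proof (rule AE_mp, intro AE_I2 impI)
      fix U assume Us: "U \<in> space M" and Uo: "U \<in> orth_set N"
      define w where "w k = (\<Sum>j<N. U (k, j) * x j)" for k
      have w1: "(\<Sum>k<N. (w k)^2) \<le> 1" using orth_norm[OF Uo, of x] x1 unfolding w_def by simp
      have "(\<Sum>e\<in>E. indicator (Fset M N s x (z e)) U :: real) = (\<Sum>e\<in>E. if s * sqrt (real N) \<le> (\<Sum>k<N. e k * w k) then 1 else 0)"
      proof (rule sum.cong[OF refl])
        fix e assume "e \<in> E"
        have "(\<Sum>i<N. z e i * w i) = (\<Sum>k<N. e k * w k) / sqrt (real N)"
          unfolding z_def by (simp add: sum_divide_distrib)
        hence "(s \<le> (\<Sum>i<N. z e i * w i)) = (s * sqrt (real N) \<le> (\<Sum>k<N. e k * w k))"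
          using N by (simp add: pos_le_divide_eq)
        thus "indicator (Fset M N s x (z e)) U = (if s * sqrt (real N) \<le> (\<Sum>k<N. e k * w k) then 1 else (0::real))"
          using Us unfolding Fset_def w_def by (simp add: indicator_def)
      qed
      also have "\<dots> = real (card {e \<in> E. s * sqrt (real N) \<le> (\<Sum>k<N. e k * w k)})"
      proof -
        have "E \<inter> {e. s * sqrt (real N) \<le> (\<Sum>k<N. e k * w k)} = {e \<in> E. s * sqrt (real N) \<le> (\<Sum>k<N. e k * w k)}"
          by blast
        thus ?thesis using fE by (simp add: sum.If_cases)
      qed
      also have "\<dots> \<le> 2^N * exp (-((s * sqrt (real N))^2)/2)"
        unfolding E_def by (rule hoeff_count[OF w1]) (use s in simp)
      also have "(s * sqrt (real N))^2 = real N * s^2"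
        by (simp add: power_mult_distrib)
      finally show "(\<Sum>e\<in>E. indicator (Fset M N s x (z e)) U) \<le> 2^N * exp (-(real N * s^2)/2)" .
    qed
  qed
  also have "\<dots> = 2^N * exp (-(real N * s^2)/2)" by (simp add: prob_space)
  finally show ?thesis by simp
qed



lemma sum_if_subset:
  fixes f :: "nat \<Rightarrow> real"
  assumes "T \<subseteq> {..<N}"
  shows "(\<Sum>j<N. if j \<in> T then f j else 0) = (\<Sum>j\<in>T. f j)"
proof -
  have "(\<Sum>j<N. if j \<in> T then f j else 0) = (\<Sum>j\<in>{..<N} \<inter> T. f j)"
    by (rule sum.inter_restrict[symmetric]) simp
  also have "{..<N} \<inter> T = T" using assms by blast
  finally show ?thesis .
qed

lemma L2_sq: "(L2_set f A)^2 = (\<Sum>i\<in>A. (f i)^2)"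
  unfolding L2_set_def by (simp add: sum_nonneg)

lemma tail_ST:
  assumes H: "haar_orthogonal N M" and N: "N > 0"
    and S: "S \<subseteq> {..<N}" and T: "T \<subseteq> {..<N}" and th: "\<theta> > 0"
  shows "measure M {U \<in> space M. \<theta> \<le> (\<Sum>i\<in>S. q i * (\<Sum>j\<in>T. U (i, j) * p j))}
          \<le> exp (-(real N * \<theta>^2) / (2 * (L2_set p T)^2 * (L2_set q S)^2))"
proof (cases "L2_set p T = 0 \<or> L2_set q S = 0")
  case True
  have fS: "finite S" "finite T" using S T finite_subset by auto
  have "(\<Sum>i\<in>S. q i * (\<Sum>j\<in>T. U (i, j) * p j)) = 0" for U
  proof (cases "L2_set p T = 0")
    case True
    hence "\<forall>j\<in>T. p j = 0" using L2_set_eq_0_iff[OF fS(2)] by auto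
    thus ?thesis by simp
  next
    case False
    hence "L2_set q S = 0" using \<open>L2_set p T = 0 \<or> L2_set q S = 0\<close> by auto
    hence "\<forall>i\<in>S. q i = 0" using L2_set_eq_0_iff[OF fS(1)] by auto
    thus ?thesis by simp
  qed
  hence e: "{U \<in> space M. \<theta> \<le> (\<Sum>i\<in>S. q i * (\<Sum>j\<in>T. U (i, j) * p j))} = {}" using th by auto
  show ?thesis unfolding e by simp
next
  case False
  define a where "a = L2_set p T"
  define b where "b = L2_set q S"
  have a: "a > 0" and b: "b > 0" using False L2_set_nonneg unfolding a_def b_def
    by (metis less_eq_real_def)+
  define x where "x j = (if j \<in> T then p j / a else 0)" for j
  define y where "y i = (if i \<in> S then q i / b else 0)" for i
  have x1: "(\<Sum>k<N. (x k)^2) = 1"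
  proof -
    have "(\<Sum>k<N. (x k)^2) = (\<Sum>k<N. if k \<in> T then (p k)^2 / a^2 else 0)"
      unfolding x_def by (intro sum.cong refl) (simp add: power_divide)
    also have "\<dots> = (\<Sum>k\<in>T. (p k)^2 / a^2)" by (rule sum_if_subset[OF T])
    also have "\<dots> = (\<Sum>k\<in>T. (p k)^2) / a^2" by (simp add: sum_divide_distrib)
    also have "(\<Sum>k\<in>T. (p k)^2) = a^2" unfolding a_def L2_sq ..
    finally show ?thesis using a by simp
  qed
  have y1: "(\<Sum>k<N. (y k)^2) = 1"
  proof -
    have "(\<Sum>k<N. (y k)^2) = (\<Sum>k<N. if k \<in> S then (q k)^2 / b^2 else 0)"
      unfolding y_def by (intro sum.cong refl) (simp add: power_divide)
    also have "\<dots> = (\<Sum>k\<in>S. (q k)^2 / b^2)" by (rule sum_if_subset[OF S])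
    also have "\<dots> = (\<Sum>k\<in>S. (q k)^2) / b^2" by (simp add: sum_divide_distrib)
    also have "(\<Sum>k\<in>S. (q k)^2) = b^2" unfolding b_def L2_sq ..
    finally show ?thesis using b by simp
  qed
  have conv: "(\<Sum>i<N. y i * (\<Sum>j<N. U (i, j) * x j)) = (\<Sum>i\<in>S. q i * (\<Sum>j\<in>T. U (i, j) * p j)) / (a * b)" for U
  proof -
    have inner: "(\<Sum>j<N. U (i, j) * x j) = (\<Sum>j\<in>T. U (i, j) * p j) / a" for i
    proof -
      have "(\<Sum>j<N. U (i, j) * x j) = (\<Sum>j<N. if j \<in> T then U (i, j) * p j / a else 0)"
        unfolding x_def by (intro sum.cong refl) simp
      also have "\<dots> = (\<Sum>j\<in>T. U (i, j) * p j / a)" by (rule sum_if_subset[OF T])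
      finally show ?thesis by (simp add: sum_divide_distrib)
    qed
    have "(\<Sum>i<N. y i * (\<Sum>j<N. U (i, j) * x j)) = (\<Sum>i<N. if i \<in> S then q i * (\<Sum>j\<in>T. U (i, j) * p j) / (a * b) else 0)"
      unfolding y_def inner by (intro sum.cong refl) simp
    also have "\<dots> = (\<Sum>i\<in>S. q i * (\<Sum>j\<in>T. U (i, j) * p j) / (a * b))" by (rule sum_if_subset[OF S])
    finally show ?thesis by (simp add: sum_divide_distrib)
  qed
  have "{U \<in> space M. \<theta> \<le> (\<Sum>i\<in>S. q i * (\<Sum>j\<in>T. U (i, j) * p j))} = Fset M N (\<theta> / (a * b)) x y"
    unfolding Fset_def conv using a b by (simp add: pos_divide_le_eq mult_ac)
  also have "measure M \<dots> \<le> exp (-(real N * (\<theta> / (a * b))^2)/2)"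
    by (rule tail_unit[OF H N x1 y1]) (use th a b in simp)
  also have "-(real N * (\<theta> / (a * b))^2)/2 = -(real N * \<theta>^2) / (2 * a^2 * b^2)"
    by (simp add: power_divide power_mult_distrib)
  finally show ?thesis unfolding a_def b_def .
qed



lemma L2_scale: "L2_set (\<lambda>i. c * f i) A = \<bar>c\<bar> * L2_set f A"
  using L2_set_right_distrib[of "\<bar>c\<bar>" f A]
  by (simp add: L2_set_def power_mult_distrib)

lemma L2_tri_diff: "L2_set g A \<le> L2_set f A + L2_set (\<lambda>i. g i - f i) A"
  using L2_set_triangle_ineq[of f "\<lambda>i. g i - f i" A] by simp

lemma L2_diff_sym: "L2_set (\<lambda>i. f i - g i) A = L2_set (\<lambda>i. g i - f i) A"
  unfolding L2_set_def by (simp add: power2_commute)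

lemma inner_le: "\<bar>\<Sum>i\<in>A. f i * g i\<bar> \<le> L2_set f A * L2_set g A"
proof -
  have "\<bar>\<Sum>i\<in>A. f i * g i\<bar> \<le> (\<Sum>i\<in>A. \<bar>f i\<bar> * \<bar>g i\<bar>)"
    using sum_abs[of "\<lambda>i. f i * g i" A] by (simp add: abs_mult)
  also have "\<dots> \<le> L2_set f A * L2_set g A" by (rule L2_set_mult_ineq)
  finally show ?thesis .
qed

lemma abs_le_L2: "finite A \<Longrightarrow> i \<in> A \<Longrightarrow> \<bar>f i\<bar> \<le> L2_set f A"
proof -
  assume "finite A" "i \<in> A"
  hence "\<bar>f i\<bar> \<le> L2_set (\<lambda>j. \<bar>f j\<bar>) A" by (rule member_le_L2_set)
  also have "L2_set (\<lambda>j. \<bar>f j\<bar>) A = L2_set f A" unfolding L2_set_def by simp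
  finally show ?thesis .
qed

definition Dg :: "nat \<Rightarrow> real set" where
  "Dg N = (\<lambda>k. real_of_int k / real N) ` {- int N .. int N}"

definition Gr :: "nat \<Rightarrow> nat set \<Rightarrow> (nat \<Rightarrow> real) set" where
  "Gr N T = {p \<in> PiE T (\<lambda>_. Dg N). L2_set p T \<le> 5/4}"

lemma Dg_finite: "finite (Dg N)" unfolding Dg_def by simp

lemma Dg_card: "card (Dg N) \<le> 2 * N + 1"
proof -
  have "card (Dg N) \<le> card {- int N .. int N}" unfolding Dg_def by (rule card_image_le) simp
  also have "\<dots> = 2 * N + 1" by simp
  finally show ?thesis .
qed

lemma Gr_finite: "finite T \<Longrightarrow> finite (Gr N T)"
  unfolding Gr_def by (rule finite_subset[of _ "PiE T (\<lambda>_. Dg N)"]) (auto intro!: finite_PiE Dg_finite)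

lemma Gr_card: "finite T \<Longrightarrow> card (Gr N T) \<le> (2 * N + 1) ^ card T"
proof -
  assume fT: "finite T"
  have "card (Gr N T) \<le> card (PiE T (\<lambda>_. Dg N))"
    unfolding Gr_def by (rule card_mono) (auto intro!: finite_PiE Dg_finite fT)
  also have "\<dots> = card (Dg N) ^ card T" using fT by (simp add: card_PiE)
  also have "\<dots> \<le> (2 * N + 1) ^ card T" by (rule power_mono[OF Dg_card]) simp
  finally show ?thesis .
qed

lemma grid_approx:
  assumes N: "N \<ge> 16" and fT: "finite T" and cT: "card T \<le> N" and v: "L2_set v T \<le> 1"
  shows "\<exists>p \<in> Gr N T. L2_set (\<lambda>j. v j - p j) T \<le> 1/4"
proof -
  define p where "p = restrict (\<lambda>j. real_of_int \<lfloor>v j * real N\<rfloor> / real N) T"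
  have Npos: "real N > 0" using N by simp
  have vb: "\<bar>v j\<bar> \<le> 1" if "j \<in> T" for j using abs_le_L2[OF fT that, of v] v by simp
  have pD: "p \<in> PiE T (\<lambda>_. Dg N)"
  proof -
    have "real_of_int \<lfloor>v j * real N\<rfloor> / real N \<in> Dg N" if "j \<in> T" for j
    proof -
      have "\<bar>v j * real N\<bar> \<le> real N" using vb[OF that] Npos by (simp add: abs_mult)
      hence "- real N \<le> v j * real N" "v j * real N \<le> real N" by linarith+
      hence "- int N \<le> \<lfloor>v j * real N\<rfloor>" "\<lfloor>v j * real N\<rfloor> \<le> int N"
        by (simp add: le_floor_iff, simp add: floor_le_iff) 
      thus ?thesis unfolding Dg_def by auto
    qed
    thus ?thesis unfolding p_def by auto
  qed
  have d: "(v j - p j)^2 \<le> 1 / (real N)^2" if "j \<in> T" for j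
  proof -
    have "v j - p j = (v j * real N - real_of_int \<lfloor>v j * real N\<rfloor>) / real N"
      using that Npos by (simp add: p_def field_simps)
    moreover have "0 \<le> v j * real N - real_of_int \<lfloor>v j * real N\<rfloor>" "v j * real N - real_of_int \<lfloor>v j * real N\<rfloor> \<le> 1"
      by linarith+
    ultimately have "\<bar>v j - p j\<bar> \<le> 1 / real N" using Npos by (simp add: divide_right_mono)
    hence "\<bar>v j - p j\<bar>^2 \<le> (1 / real N)^2" by (rule power_mono) simp
    thus ?thesis by (simp add: power_divide)
  qed
  have "(\<Sum>j\<in>T. (v j - p j)^2) \<le> (\<Sum>j\<in>T. 1 / (real N)^2)" by (rule sum_mono) (rule d)
  also have "\<dots> = real (card T) / (real N)^2" by simp
  also have "\<dots> \<le> real N / (real N)^2" using cT by (intro divide_right_mono) auto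
  also have "\<dots> = 1 / real N" by (simp add: power2_eq_square)
  also have "\<dots> \<le> 1/16" using N by (simp add: divide_simps)
  finally have s: "(\<Sum>j\<in>T. (v j - p j)^2) \<le> 1/16" .
  have e: "L2_set (\<lambda>j. v j - p j) T \<le> 1/4"
  proof -
    have "L2_set (\<lambda>j. v j - p j) T \<le> sqrt (1/16)" unfolding L2_set_def using s by (rule real_sqrt_le_mono)
    also have "sqrt (1/16) = (1/4::real)" by (simp add: real_sqrt_divide)
    finally show ?thesis .
  qed
  have "L2_set p T \<le> L2_set v T + L2_set (\<lambda>j. p j - v j) T" by (rule L2_tri_diff)
  also have "\<dots> \<le> 5/4" using v e L2_diff_sym[of p v T] by simp
  finally have "p \<in> Gr N T" unfolding Gr_def using pD by simp
  thus ?thesis using e by blast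
qed



definition Wv :: "(nat \<times> nat \<Rightarrow> real) \<Rightarrow> nat set \<Rightarrow> (nat \<Rightarrow> real) \<Rightarrow> nat \<Rightarrow> real" where
  "Wv U T x i = (\<Sum>j\<in>T. U (i, j) * x j)"

lemma Wv_diff: "Wv U T (\<lambda>j. x j - y j) i = Wv U T x i - Wv U T y i"
  unfolding Wv_def by (simp add: algebra_simps sum_subtractf)

lemma Wv_scale: "Wv U T (\<lambda>j. c * x j) i = c * Wv U T x i"
  unfolding Wv_def by (simp add: sum_distrib_left mult_ac)

lemma sub_opnorm_alt:
  "sub_opnorm U S T = Sup {L2_set (Wv U T x) S / L2_set x T | x. \<exists>j\<in>T. x j \<noteq> 0}"
  unfolding sub_opnorm_def L2_set_def Wv_def ..

lemma Wv_bound: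
  assumes fT: "finite T"
  shows "L2_set (Wv U T x) S \<le> L2_set (\<lambda>i. L2_set (\<lambda>j. U (i, j)) T) S * L2_set x T"
proof -
  have "L2_set (\<lambda>i. \<bar>Wv U T x i\<bar>) S \<le> L2_set (\<lambda>i. L2_set (\<lambda>j. U (i, j)) T * L2_set x T) S"
  proof (rule L2_set_mono)
    fix i
    show "0 \<le> \<bar>Wv U T x i\<bar>" by simp
    show "\<bar>Wv U T x i\<bar> \<le> L2_set (\<lambda>j. U (i, j)) T * L2_set x T"
      unfolding Wv_def by (rule inner_le)
  qed
  hence "L2_set (Wv U T x) S \<le> L2_set (\<lambda>i. L2_set (\<lambda>j. U (i, j)) T * L2_set x T) S"
    by (simp add: L2_set_def)
  also have "\<dots> = L2_set (\<lambda>i. L2_set (\<lambda>j. U (i, j)) T) S * L2_set x T"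
    by (rule L2_set_left_distrib[symmetric]) simp
  finally show ?thesis .
qed

lemma net_bound:
  assumes N: "N \<ge> 16" and S: "S \<subseteq> {..<N}" and T: "T \<subseteq> {..<N}" and Sne: "S \<noteq> {}" and Tne: "T \<noteq> {}"
    and th: "\<theta> > 0"
    and hyp: "\<And>p q. p \<in> Gr N T \<Longrightarrow> q \<in> Gr N S \<Longrightarrow> (\<Sum>i\<in>S. q i * (\<Sum>j\<in>T. U (i, j) * p j)) < \<theta>"
  shows "sub_opnorm U S T \<le> 16/9 * \<theta>"
proof -
  have fS: "finite S" and fT: "finite T" using S T finite_subset by auto
  have cS: "card S \<le> N" and cT: "card T \<le> N"
    using card_mono[OF _ S] card_mono[OF _ T] by auto
  define R where "R = {L2_set (Wv U T x) S / L2_set x T | x. \<exists>j\<in>T. x j \<noteq> 0}"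
  define m where "m = Sup R"
  define K where "K = L2_set (\<lambda>i. L2_set (\<lambda>j. U (i, j)) T) S"
  have nz: "(\<exists>j\<in>T. x j \<noteq> 0) \<longleftrightarrow> L2_set x T > 0" for x
    using L2_set_eq_0_iff[OF fT, of x] L2_set_nonneg[of x T] by (auto simp: less_le)
  obtain j0 where j0: "j0 \<in> T" using Tne by blast
  have Rne: "R \<noteq> {}"
  proof -
    have "L2_set (Wv U T (\<lambda>j. 1)) S / L2_set (\<lambda>j. 1) T \<in> R" unfolding R_def using j0 by (intro CollectI exI[of _ "\<lambda>j. 1"]) auto
    thus ?thesis by blast
  qed
  have Rbdd: "bdd_above R"
  proof (rule bdd_aboveI)
    fix r assume "r \<in> R"
    then obtain x where r: "r = L2_set (Wv U T x) S / L2_set x T" and x: "L2_set x T > 0"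
      unfolding R_def using nz by auto
    have "L2_set (Wv U T x) S \<le> K * L2_set x T" unfolding K_def by (rule Wv_bound[OF fT])
    thus "r \<le> K" using x r by (simp add: divide_le_eq)
  qed
  have m0: "0 \<le> m"
  proof -
    obtain r where "r \<in> R" using Rne by blast
    moreover have "\<forall>r\<in>R. 0 \<le> r" unfolding R_def by auto
    ultimately show ?thesis unfolding m_def using cSup_upper[OF _ Rbdd] by (meson order_trans)
  qed
  have F1: "L2_set (Wv U T x) S \<le> m * L2_set x T" for x
  proof (cases "L2_set x T > 0")
    case True
    hence "L2_set (Wv U T x) S / L2_set x T \<in> R" unfolding R_def using nz by auto
    hence "L2_set (Wv U T x) S / L2_set x T \<le> m" unfolding m_def by (rule cSup_upper[OF _ Rbdd])
    thus ?thesis using True by (simp add: divide_le_eq)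
  next
    case False
    hence "L2_set x T = 0" using L2_set_nonneg[of x T] by linarith
    hence "\<forall>j\<in>T. x j = 0" using L2_set_eq_0_iff[OF fT] by auto
    hence "\<forall>i\<in>S. Wv U T x i = 0" unfolding Wv_def by simp
    hence "L2_set (Wv U T x) S = 0" by (simp add: L2_set_0')
    thus ?thesis using \<open>L2_set x T = 0\<close> by simp
  qed
  have F3: "L2_set (Wv U T p) S \<le> 4/3 * \<theta>" if p: "p \<in> Gr N T" for p
  proof -
    define r where "r = L2_set (Wv U T p) S"
    show ?thesis
    proof (cases "r = 0")
      case True thus ?thesis using th unfolding r_def by simp
    next
      case False
      hence r0: "r > 0" using L2_set_nonneg[of "Wv U T p" S] unfolding r_def by linarith
      define v where "v i = Wv U T p i / r" for i
      have vn: "L2_set v S = 1"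
      proof -
        have "L2_set v S = L2_set (\<lambda>i. (1/r) * Wv U T p i) S" unfolding v_def by simp
        also have "\<dots> = 1" using r0 unfolding L2_scale r_def[symmetric] by simp
        finally show ?thesis .
      qed
      obtain q where q: "q \<in> Gr N S" and vq: "L2_set (\<lambda>i. v i - q i) S \<le> 1/4"
        using grid_approx[OF N fS cS, of v] vn by auto
      have "r = (\<Sum>i\<in>S. v i * Wv U T p i)"
      proof -
        have "(\<Sum>i\<in>S. v i * Wv U T p i) = (\<Sum>i\<in>S. (Wv U T p i)^2) / r"
          unfolding v_def by (simp add: sum_divide_distrib power2_eq_square)
        also have "(\<Sum>i\<in>S. (Wv U T p i)^2) = r^2" unfolding r_def L2_sq ..
        finally show ?thesis using r0 by (simp add: power2_eq_square)
      qed
      also have "\<dots> = (\<Sum>i\<in>S. q i * Wv U T p i) + (\<Sum>i\<in>S. (v i - q i) * Wv U T p i)"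
        by (simp add: algebra_simps sum.distrib[symmetric])
      also have "(\<Sum>i\<in>S. q i * Wv U T p i) < \<theta>" using hyp[OF p q] unfolding Wv_def .
      also have "(\<Sum>i\<in>S. (v i - q i) * Wv U T p i) \<le> L2_set (\<lambda>i. v i - q i) S * r"
        unfolding r_def using inner_le[of "\<lambda>i. v i - q i" "Wv U T p" S] by linarith
      also have "\<dots> \<le> 1/4 * r" using vq r0 by (intro mult_right_mono) auto
      finally have "r < \<theta> + 1/4 * r" by simp
      thus ?thesis unfolding r_def[symmetric] by simp
    qed
  qed
  have F4: "L2_set (Wv U T x) S \<le> 4/3 * \<theta> + m / 4" if x1: "L2_set x T = 1" for x
  proof -
    obtain p where p: "p \<in> Gr N T" and xp: "L2_set (\<lambda>j. x j - p j) T \<le> 1/4"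
      using grid_approx[OF N fT cT, of x] x1 by auto
    have "L2_set (Wv U T x) S \<le> L2_set (Wv U T p) S + L2_set (\<lambda>i. Wv U T x i - Wv U T p i) S"
      by (rule L2_tri_diff)
    also have "(\<lambda>i. Wv U T x i - Wv U T p i) = Wv U T (\<lambda>j. x j - p j)"
      by (rule ext) (simp add: Wv_diff)
    also have "L2_set (Wv U T (\<lambda>j. x j - p j)) S \<le> m * L2_set (\<lambda>j. x j - p j) T" by (rule F1)
    also have "\<dots> \<le> m * (1/4)" using xp m0 by (rule mult_left_mono)
    also have "L2_set (Wv U T p) S \<le> 4/3 * \<theta>" by (rule F3[OF p])
    finally show ?thesis by simp
  qed
  have F5: "r \<le> 4/3 * \<theta> + m / 4" if "r \<in> R" for r
  proof -
    obtain x where r: "r = L2_set (Wv U T x) S / L2_set x T" and x: "L2_set x T > 0"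
      using \<open>r \<in> R\<close> unfolding R_def using nz by auto
    define c where "c = L2_set x T"
    define x' where "x' j = (1/c) * x j" for j
    have "L2_set x' T = 1" unfolding x'_def L2_scale c_def using x by simp
    hence "L2_set (Wv U T x') S \<le> 4/3 * \<theta> + m / 4" by (rule F4)
    moreover have "L2_set (Wv U T x') S = r"
    proof -
      have eq: "Wv U T x' = (\<lambda>i. (1/c) * Wv U T x i)" unfolding x'_def by (rule ext) (rule Wv_scale)
      have "L2_set (Wv U T x') S = \<bar>1/c\<bar> * L2_set (Wv U T x) S" unfolding eq by (rule L2_scale)
      hence "L2_set (Wv U T x') S = (1/c) * L2_set (Wv U T x) S" using x c_def by simp
      thus ?thesis using r c_def by simp
    qed
    ultimately show ?thesis by simp
  qed
  have "Sup R \<le> 4/3 * \<theta> + m / 4" by (rule cSup_least[OF Rne]) (rule F5)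
  hence "m \<le> 4/3 * \<theta> + m / 4" unfolding m_def .
  hence "m \<le> 16/9 * \<theta>" by simp
  thus ?thesis unfolding m_def R_def sub_opnorm_alt .
qed



lemma sub_opnorm_bound:
  assumes fT: "finite T"
  shows "L2_set (Wv U T x) S \<le> sub_opnorm U S T * L2_set x T"
proof -
  define R where "R = {L2_set (Wv U T x) S / L2_set x T | x. \<exists>j\<in>T. x j \<noteq> 0}"
  define K where "K = L2_set (\<lambda>i. L2_set (\<lambda>j. U (i, j)) T) S"
  have nz: "(\<exists>j\<in>T. x j \<noteq> 0) \<longleftrightarrow> L2_set x T > 0" for x
    using L2_set_eq_0_iff[OF fT, of x] L2_set_nonneg[of x T] by (auto simp: less_le)
  have Rbdd: "bdd_above R"
  proof (rule bdd_aboveI)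
    fix r assume "r \<in> R"
    then obtain x where r: "r = L2_set (Wv U T x) S / L2_set x T" and x: "L2_set x T > 0"
      unfolding R_def using nz by auto
    have "L2_set (Wv U T x) S \<le> K * L2_set x T" unfolding K_def by (rule Wv_bound[OF fT])
    thus "r \<le> K" using x r by (simp add: divide_le_eq)
  qed
  show ?thesis
  proof (cases "L2_set x T > 0")
    case True
    hence "L2_set (Wv U T x) S / L2_set x T \<in> R" unfolding R_def using nz by auto
    hence "L2_set (Wv U T x) S / L2_set x T \<le> Sup R" by (rule cSup_upper[OF _ Rbdd])
    thus ?thesis using True by (simp add: divide_le_eq sub_opnorm_alt R_def)
  next
    case False
    hence "L2_set x T = 0" using L2_set_nonneg[of x T] by linarith
    hence "\<forall>j\<in>T. x j = 0" using L2_set_eq_0_iff[OF fT] by auto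
    hence "\<forall>i\<in>S. Wv U T x i = 0" unfolding Wv_def by simp
    hence "L2_set (Wv U T x) S = 0" by (simp add: L2_set_0')
    thus ?thesis using \<open>L2_set x T = 0\<close> by simp
  qed
qed

lemma sub_opnorm_le:
  assumes fT: "finite T" and Tne: "T \<noteq> {}"
    and h: "\<And>x. L2_set (Wv U T x) S \<le> d * L2_set x T"
  shows "sub_opnorm U S T \<le> d"
proof -
  define R where "R = {L2_set (Wv U T x) S / L2_set x T | x. \<exists>j\<in>T. x j \<noteq> 0}"
  have nz: "(\<exists>j\<in>T. x j \<noteq> 0) \<longleftrightarrow> L2_set x T > 0" for x
    using L2_set_eq_0_iff[OF fT, of x] L2_set_nonneg[of x T] by (auto simp: less_le)
  obtain j0 where j0: "j0 \<in> T" using Tne by blast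
  have Rne: "R \<noteq> {}"
  proof -
    have "L2_set (Wv U T (\<lambda>j. 1)) S / L2_set (\<lambda>j. 1) T \<in> R" unfolding R_def using j0
      by (intro CollectI exI[of _ "\<lambda>j. 1"]) auto
    thus ?thesis by blast
  qed
  have "Sup R \<le> d"
  proof (rule cSup_least[OF Rne])
    fix r assume "r \<in> R"
    then obtain x where r: "r = L2_set (Wv U T x) S / L2_set x T" and x: "L2_set x T > 0"
      unfolding R_def using nz by auto
    show "r \<le> d" using h[of x] x r by (simp add: divide_le_eq)
  qed
  thus ?thesis by (simp add: sub_opnorm_alt R_def)
qed

definition Dset :: "nat set \<Rightarrow> (nat \<Rightarrow> real) set" where
  "Dset T = (\<lambda>(k, n). \<lambda>j. if j \<in> T then real_of_int (k j) / (real n + 1) else 0) ` ((T \<rightarrow>\<^sub>E (UNIV :: int set)) \<times> (UNIV :: nat set))"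

lemma Dset_countable: "finite T \<Longrightarrow> countable (Dset T)"
  unfolding Dset_def by (intro countable_image countable_SIGMA countable_PiE) auto

lemma Dset_ne: "Dset T \<noteq> {}"
  unfolding Dset_def by auto

lemma floor_approx: "(\<lambda>k. real_of_int \<lfloor>a * (real k + 1)\<rfloor> / (real k + 1)) \<longlonglongrightarrow> a"
proof (rule real_tendsto_sandwich)
  show "\<forall>\<^sub>F k in sequentially. a - inverse (real (Suc k)) \<le> real_of_int \<lfloor>a * (real k + 1)\<rfloor> / (real k + 1)"
  proof (intro always_eventually allI)
    fix k :: nat
    have p: "real k + 1 > 0" by simp
    have "a * (real k + 1) - 1 \<le> real_of_int \<lfloor>a * (real k + 1)\<rfloor>" by linarith
    hence "(a * (real k + 1) - 1) / (real k + 1) \<le> real_of_int \<lfloor>a * (real k + 1)\<rfloor> / (real k + 1)"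
      using p by (intro divide_right_mono) auto
    moreover have "(a * (real k + 1) - 1) / (real k + 1) = a - inverse (real (Suc k))"
      using p by (simp add: field_simps)
    ultimately show "a - inverse (real (Suc k)) \<le> real_of_int \<lfloor>a * (real k + 1)\<rfloor> / (real k + 1)" by simp
  qed
  show "\<forall>\<^sub>F k in sequentially. real_of_int \<lfloor>a * (real k + 1)\<rfloor> / (real k + 1) \<le> a"
  proof (intro always_eventually allI)
    fix k :: nat
    have p: "real k + 1 > 0" by simp
    have "real_of_int \<lfloor>a * (real k + 1)\<rfloor> \<le> a * (real k + 1)" by linarith
    thus "real_of_int \<lfloor>a * (real k + 1)\<rfloor> / (real k + 1) \<le> a" using p by (simp add: divide_le_eq)
  qed
  show "(\<lambda>k. a - inverse (real (Suc k))) \<longlonglongrightarrow> a"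
    using tendsto_diff[OF tendsto_const LIMSEQ_inverse_real_of_nat, of a] by simp
  show "(\<lambda>k. a) \<longlonglongrightarrow> a" by simp
qed

lemma density:
  assumes fT: "finite T" and h: "\<And>x. x \<in> Dset T \<Longrightarrow> L2_set (Wv U T x) S \<le> d * L2_set x T"
  shows "L2_set (Wv U T x) S \<le> d * L2_set x T"
proof -
  define xs where "xs k = (\<lambda>j. if j \<in> T then real_of_int \<lfloor>x j * (real k + 1)\<rfloor> / (real k + 1) else 0)" for k :: nat
  have xsD: "xs k \<in> Dset T" for k
  proof -
    have "xs k = (\<lambda>(k, n). \<lambda>j. if j \<in> T then real_of_int (k j) / (real n + 1) else 0) (restrict (\<lambda>j. \<lfloor>x j * (real k + 1)\<rfloor>) T, k)"
      unfolding xs_def by (intro ext) auto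
    thus ?thesis unfolding Dset_def by auto
  qed
  have cj: "(\<lambda>k. xs k j) \<longlonglongrightarrow> x j" if "j \<in> T" for j
    unfolding xs_def using that floor_approx[of "x j"] by simp
  have c1: "(\<lambda>k. L2_set (Wv U T (xs k)) S) \<longlonglongrightarrow> L2_set (Wv U T x) S"
    unfolding L2_set_def Wv_def by (intro tendsto_real_sqrt tendsto_sum tendsto_power tendsto_mult tendsto_const cj)
  have c2: "(\<lambda>k. L2_set (xs k) T) \<longlonglongrightarrow> L2_set x T"
    unfolding L2_set_def by (intro tendsto_real_sqrt tendsto_sum tendsto_power cj)
  have c: "(\<lambda>k. L2_set (Wv U T (xs k)) S - d * L2_set (xs k) T) \<longlonglongrightarrow> L2_set (Wv U T x) S - d * L2_set x T"
    by (intro tendsto_diff tendsto_mult tendsto_const c1 c2)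
  have "L2_set (Wv U T x) S - d * L2_set x T \<le> 0"
    by (rule tendsto_upperbound[OF c]) (auto intro!: always_eventually simp: h[OF xsD])
  thus ?thesis by simp
qed

lemma opnorm_less_iff:
  assumes fT: "finite T" and Tne: "T \<noteq> {}"
  shows "sub_opnorm U S T < c \<longleftrightarrow>
     (\<exists>n::nat. \<forall>i::nat. L2_set (Wv U T (from_nat_into (Dset T) i)) S
        \<le> (c - 1 / (real n + 1)) * L2_set (from_nat_into (Dset T) i) T)"
proof
  assume a: "sub_opnorm U S T < c"
  obtain n :: nat where n: "inverse (real (Suc n)) < c - sub_opnorm U S T"
    using reals_Archimedean[of "c - sub_opnorm U S T"] a by auto
  have "L2_set (Wv U T y) S \<le> (c - 1 / (real n + 1)) * L2_set y T" for y
  proof -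
    have "L2_set (Wv U T y) S \<le> sub_opnorm U S T * L2_set y T" by (rule sub_opnorm_bound[OF fT])
    also have "\<dots> \<le> (c - 1 / (real n + 1)) * L2_set y T"
      using n by (intro mult_right_mono) (auto simp: inverse_eq_divide add.commute)
    finally show ?thesis .
  qed
  thus "\<exists>n::nat. \<forall>i::nat. L2_set (Wv U T (from_nat_into (Dset T) i)) S
        \<le> (c - 1 / (real n + 1)) * L2_set (from_nat_into (Dset T) i) T" by blast
next
  assume "\<exists>n::nat. \<forall>i::nat. L2_set (Wv U T (from_nat_into (Dset T) i)) S
        \<le> (c - 1 / (real n + 1)) * L2_set (from_nat_into (Dset T) i) T"
  then obtain n :: nat where n: "\<And>i. L2_set (Wv U T (from_nat_into (Dset T) i)) S
        \<le> (c - 1 / (real n + 1)) * L2_set (from_nat_into (Dset T) i) T" by blast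
  have "L2_set (Wv U T x) S \<le> (c - 1 / (real n + 1)) * L2_set x T" if "x \<in> Dset T" for x
  proof -
    have "x \<in> range (from_nat_into (Dset T))" using that Dset_ne Dset_countable[OF fT] by simp
    then obtain i where "x = from_nat_into (Dset T) i" by blast
    thus ?thesis using n by simp
  qed
  hence "\<And>x. L2_set (Wv U T x) S \<le> (c - 1 / (real n + 1)) * L2_set x T"
    using density[OF fT] by blast
  hence "sub_opnorm U S T \<le> c - 1 / (real n + 1)" by (rule sub_opnorm_le[OF fT Tne])
  moreover have "1 / (real n + 1) > 0" by simp
  ultimately show "sub_opnorm U S T < c" by linarith
qed

lemma opnorm_meas:
  assumes fT: "finite T" and Tne: "T \<noteq> {}"
  shows "{U \<in> space (matrix_space N). sub_opnorm U S T < c} \<in> sets (matrix_space N)"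
proof -
  have "{U \<in> space (matrix_space N). sub_opnorm U S T < c} = {U \<in> space (matrix_space N).
     (\<exists>n::nat. \<forall>i::nat. L2_set (Wv U T (from_nat_into (Dset T) i)) S
        \<le> (c - 1 / (real n + 1)) * L2_set (from_nat_into (Dset T) i) T)}"
    using opnorm_less_iff[OF fT Tne] by blast
  also have "\<dots> \<in> sets (matrix_space N)"
    unfolding L2_set_def Wv_def by measurable
  finally show ?thesis .
qed



lemma tail_grid:
  assumes H: "haar_orthogonal N M" and N: "N \<ge> 16"
    and S: "S \<subseteq> {..<N}" and T: "T \<subseteq> {..<N}" and th: "\<theta> > 0"
    and p: "p \<in> Gr N T" and q: "q \<in> Gr N S"
    and th2: "real N * \<theta>^2 = 25 * (real (card S) + real (card T)) * ln (real N)"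
  shows "measure M {U \<in> space M. \<theta> \<le> (\<Sum>i\<in>S. q i * (\<Sum>j\<in>T. U (i, j) * p j))}
          \<le> exp (-5 * (real (card S) + real (card T)) * ln (real N))"
proof (cases "L2_set p T = 0 \<or> L2_set q S = 0")
  case True
  have fS: "finite S" "finite T" using S T finite_subset by auto
  have "(\<Sum>i\<in>S. q i * (\<Sum>j\<in>T. U (i, j) * p j)) = 0" for U
  proof (cases "L2_set p T = 0")
    case True
    hence "\<forall>j\<in>T. p j = 0" using L2_set_eq_0_iff[OF fS(2)] by auto
    thus ?thesis by simp
  next
    case False
    hence "L2_set q S = 0" using \<open>L2_set p T = 0 \<or> L2_set q S = 0\<close> by auto
    hence "\<forall>i\<in>S. q i = 0" using L2_set_eq_0_iff[OF fS(1)] by auto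
    thus ?thesis by simp
  qed
  hence e: "{U \<in> space M. \<theta> \<le> (\<Sum>i\<in>S. q i * (\<Sum>j\<in>T. U (i, j) * p j))} = {}" using th by auto
  show ?thesis unfolding e by simp
next
  case False
  define A where "A = L2_set p T"
  define B where "B = L2_set q S"
  have A: "A > 0" and B: "B > 0" using False L2_set_nonneg unfolding A_def B_def
    by (metis less_eq_real_def)+
  have A1: "A \<le> 5/4" and B1: "B \<le> 5/4" using p q unfolding A_def B_def Gr_def by auto
  have "A^2 \<le> (5/4)^2" using A A1 by (intro power_mono) auto
  moreover have "B^2 \<le> (5/4)^2" using B B1 by (intro power_mono) auto
  ultimately have "A^2 * B^2 \<le> (5/4)^2 * (5/4)^2" by (intro mult_mono) auto
  moreover have "(5/4::real)^2 * (5/4)^2 = 625/256" by (simp add: power2_eq_square)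
  ultimately have AB: "2 * A^2 * B^2 \<le> 5" by simp
  have ABp: "2 * A^2 * B^2 > 0" using A B by simp
  define X where "X = 25 * (real (card S) + real (card T)) * ln (real N)"
  have X0: "X \<ge> 0" unfolding X_def using N by simp
  have "X / 5 \<le> X / (2 * A^2 * B^2)"
    using X0 AB ABp by (intro divide_left_mono) auto
  hence le: "-(real N * \<theta>^2) / (2 * A^2 * B^2) \<le> -5 * (real (card S) + real (card T)) * ln (real N)"
  proof -
    have e1: "-(real N * \<theta>^2) / (2 * A^2 * B^2) = -(X / (2 * A^2 * B^2))" using th2 unfolding X_def by simp
    have e2: "-5 * (real (card S) + real (card T)) * ln (real N) = -(X / 5)" unfolding X_def by (simp add: algebra_simps)
    show ?thesis unfolding e1 e2 using \<open>X / 5 \<le> X / (2 * A^2 * B^2)\<close> by linarith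
  qed
  have "measure M {U \<in> space M. \<theta> \<le> (\<Sum>i\<in>S. q i * (\<Sum>j\<in>T. U (i, j) * p j))}
          \<le> exp (-(real N * \<theta>^2) / (2 * A^2 * B^2))"
    unfolding A_def B_def by (rule tail_ST[OF H _ S T th]) (use N in simp)
  also have "\<dots> \<le> exp (-5 * (real (card S) + real (card T)) * ln (real N))"
    using le by simp
  finally show ?thesis .
qed

lemma exp_pow: "N > 0 \<Longrightarrow> exp (-5 * (real a + real b) * ln (real N)) = (1 / real N ^ 5) ^ a * (1 / real N ^ 5) ^ b"
proof -
  assume N: "N > 0"
  have "exp (-5 * (real a + real b) * ln (real N)) = exp (real a * (-5 * ln (real N))) * exp (real b * (-5 * ln (real N)))"
    by (simp add: algebra_simps flip: exp_add)
  also have "exp (-5 * ln (real N)) = 1 / real N ^ 5"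
  proof -
    have "exp (5 * ln (real N)) = real N ^ 5"
      using exp_of_nat_mult[of 5 "ln (real N)"] N by simp
    thus ?thesis by (simp add: exp_minus field_simps)
  qed
  hence "exp (real a * (-5 * ln (real N))) = (1 / real N ^ 5) ^ a"
    by (simp only: exp_of_nat_mult)
  moreover have "exp (real b * (-5 * ln (real N))) = (1 / real N ^ 5) ^ b"
    using \<open>exp (-5 * ln (real N)) = 1 / real N ^ 5\<close> by (simp only: exp_of_nat_mult)
  ultimately show ?thesis by simp
qed

lemma sum_pow_card: "(\<Sum>X\<in>Pow {..<N}. (r::real) ^ card X) = (1 + r) ^ N"
proof -
  have "(\<Prod>x\<in>{..<N}. r + 1) = (\<Sum>X\<in>Pow {..<N}. (\<Prod>x\<in>X. r) * (\<Prod>x\<in>{..<N} - X. 1))"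
    by (rule prod_add) simp
  thus ?thesis by (simp add: add.commute)
qed

lemma sum_pow_card_ne: "(\<Sum>X\<in>Pow {..<N} - {{}}. (r::real) ^ card X) = (1 + r) ^ N - 1"
proof -
  have "(\<Sum>X\<in>Pow {..<N}. r ^ card X) = r ^ card ({}::nat set) + (\<Sum>X\<in>Pow {..<N} - {{}}. r ^ card X)"
    by (rule sum.remove) auto
  thus ?thesis using sum_pow_card[where N=N and r=r] by simp
qed



lemma form_meas:
  assumes H: "haar_orthogonal N M"
  shows "{U \<in> space M. c \<le> (\<Sum>i\<in>S. q i * (\<Sum>j\<in>T. U (i, j) * p j))} \<in> sets M"
proof -
  have "{U \<in> space (matrix_space N). c \<le> (\<Sum>i\<in>S. q i * (\<Sum>j\<in>T. U (i, j) * p j))} \<in> sets (matrix_space N)"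
    by measurable
  thus ?thesis using haar_space[OF H] haar_sets[OF H] by simp
qed

lemma main_bound:
  assumes H: "haar_orthogonal N M" and N: "N \<ge> 16"
  shows "1 - ((1 + (2 * real N + 1) / real N ^ 5) ^ N - 1)^2 \<le>
    measure M {U \<in> space M. \<forall>S T. S \<subseteq> {..<N} \<and> T \<subseteq> {..<N} \<and> S \<noteq> {} \<and> T \<noteq> {} \<longrightarrow>
            sub_opnorm U S T < sqrt (100 * (real (card S) + real (card T)) * ln (real N) / real N)}"
proof -
  interpret prob_space M using H by (rule haar_prob)
  define bnd where "bnd S T = sqrt (100 * (real (card S) + real (card T)) * ln (real N) / real N)" for S T :: "nat set"
  define th where "th S T = bnd S T / 2" for S T
  define PS where "PS = Pow {..<N} - {{}}"
  define Bd where "Bd = (\<lambda>((S, T), (p, q)). {U \<in> space M. th S T \<le> (\<Sum>i\<in>S. q i * (\<Sum>j\<in>T. U (i, j) * p j))})"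
  define I where "I = (SIGMA st:(PS \<times> PS). Gr N (snd st) \<times> Gr N (fst st))"
  define Bad where "Bad = (\<Union>i\<in>I. Bd i)"
  define Good where "Good = {U \<in> space M. \<forall>S T. S \<subseteq> {..<N} \<and> T \<subseteq> {..<N} \<and> S \<noteq> {} \<and> T \<noteq> {} \<longrightarrow>
            sub_opnorm U S T < sqrt (100 * (real (card S) + real (card T)) * ln (real N) / real N)}"
  define r where "r = (2 * real N + 1) / real N ^ 5"
  have Npos: "real N > 0" using N by simp
  have lnpos: "ln (real N) > 0" using N by simp
  have fPS: "finite PS" unfolding PS_def by simp
  have PSsub: "S \<subseteq> {..<N}" "finite S" "S \<noteq> {}" if "S \<in> PS" for S
    using that finite_subset[of S "{..<N}"] unfolding PS_def by auto
  have fI: "finite I" unfolding I_def using fPS PSsub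
    by (intro finite_SigmaI) (auto intro!: Gr_finite)
  have Bdm: "Bd i \<in> sets M" for i
    unfolding Bd_def by (cases i) (auto intro!: form_meas[OF H])
  have bndpos: "bnd S T > 0" if "S \<in> PS" for S T
  proof -
    have "card S > 0" using PSsub[OF that] by (simp add: card_gt_0_iff)
    hence "100 * (real (card S) + real (card T)) * ln (real N) / real N > 0"
      using lnpos Npos by simp
    thus ?thesis unfolding bnd_def by simp
  qed
  have th2: "real N * (th S T)^2 = 25 * (real (card S) + real (card T)) * ln (real N)" for S T
  proof -
    have "0 \<le> 100 * (real (card S) + real (card T)) * ln (real N) / real N" using lnpos Npos by simp
    hence "(bnd S T)^2 = 100 * (real (card S) + real (card T)) * ln (real N) / real N"
      unfolding bnd_def by simp
    thus ?thesis unfolding th_def using Npos by (simp add: power_divide field_simps)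
  qed
  have incl: "space M - Bad \<subseteq> Good"
  proof
    fix U assume U: "U \<in> space M - Bad"
    have "sub_opnorm U S T < bnd S T" if S: "S \<in> PS" and T: "T \<in> PS" for S T
    proof -
      have "sub_opnorm U S T \<le> 16/9 * th S T"
      proof (rule net_bound[OF N PSsub(1)[OF S] PSsub(1)[OF T] PSsub(3)[OF S] PSsub(3)[OF T]])
        show "0 < th S T" unfolding th_def using bndpos[OF S] by simp
        fix p q assume p: "p \<in> Gr N T" and q: "q \<in> Gr N S"
        have "((S, T), (p, q)) \<in> I" unfolding I_def using S T p q by auto
        hence "U \<notin> Bd ((S, T), (p, q))" using U unfolding Bad_def by auto
        thus "(\<Sum>i\<in>S. q i * (\<Sum>j\<in>T. U (i, j) * p j)) < th S T" using U unfolding Bd_def by auto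
      qed
      also have "\<dots> < bnd S T" unfolding th_def using bndpos[OF S] by simp
      finally show ?thesis .
    qed
    thus "U \<in> Good" using U unfolding Good_def bnd_def PS_def by auto
  qed
  have Goodm: "Good \<in> sets M"
  proof -
    have "Good = {U \<in> space M. \<forall>st \<in> PS \<times> PS. sub_opnorm U (fst st) (snd st) < bnd (fst st) (snd st)}"
      unfolding Good_def PS_def bnd_def by auto
    also have "\<dots> \<in> sets M"
    proof (rule sets.sets_Collect_finite_All)
      show "finite (PS \<times> PS)" using fPS by simp
      fix st assume st: "st \<in> PS \<times> PS"
      have "{U \<in> space (matrix_space N). sub_opnorm U (fst st) (snd st) < bnd (fst st) (snd st)} \<in> sets (matrix_space N)"
        using st PSsub by (intro opnorm_meas) auto
      thus "{U \<in> space M. sub_opnorm U (fst st) (snd st) < bnd (fst st) (snd st)} \<in> sets M"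
        using haar_space[OF H] haar_sets[OF H] by simp
    qed
    finally show ?thesis .
  qed
  have Badm: "Bad \<in> sets M" unfolding Bad_def using fI Bdm by auto
  have Badsub: "Bad \<subseteq> space M" unfolding Bad_def Bd_def by auto
  have each: "measure M (Bd ((S, T), (p, q))) \<le> r ^ card S * r ^ card T / ((2 * real N + 1) ^ card S * (2 * real N + 1) ^ card T)"
    if S: "S \<in> PS" and T: "T \<in> PS" and p: "p \<in> Gr N T" and q: "q \<in> Gr N S" for S T p q
  proof -
    have "measure M (Bd ((S, T), (p, q))) \<le> exp (-5 * (real (card S) + real (card T)) * ln (real N))"
      unfolding Bd_def using tail_grid[OF H N PSsub(1)[OF S] PSsub(1)[OF T] _ p q th2]
        bndpos[OF S] unfolding th_def by simp
    also have "\<dots> = (1 / real N ^ 5) ^ card S * (1 / real N ^ 5) ^ card T"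
      using Npos by (intro exp_pow) simp
    also have "\<dots> = r ^ card S * r ^ card T / ((2 * real N + 1) ^ card S * (2 * real N + 1) ^ card T)"
      unfolding r_def by (simp add: power_divide field_simps)
    finally show ?thesis .
  qed
  have "measure M Bad \<le> (\<Sum>i\<in>I. measure M (Bd i))"
    unfolding Bad_def using fI Bdm by (intro measure_UNION_le) auto
  also have "\<dots> = (\<Sum>st\<in>PS \<times> PS. \<Sum>pq\<in>Gr N (snd st) \<times> Gr N (fst st). measure M (Bd (st, pq)))"
    unfolding I_def using fPS PSsub by (subst sum.Sigma) (auto intro!: Gr_finite)
  also have "\<dots> \<le> (\<Sum>st\<in>PS \<times> PS. r ^ card (fst st) * r ^ card (snd st))"
  proof (rule sum_mono)
    fix st assume st: "st \<in> PS \<times> PS"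
    obtain S T where stST: "st = (S, T)" by force
    have S: "S \<in> PS" and T: "T \<in> PS" using st stST by auto
    define c where "c = r ^ card S * r ^ card T / ((2 * real N + 1) ^ card S * (2 * real N + 1) ^ card T)"
    have "(\<Sum>pq\<in>Gr N T \<times> Gr N S. measure M (Bd ((S, T), pq))) \<le> (\<Sum>pq\<in>Gr N T \<times> Gr N S. c)"
      unfolding c_def by (rule sum_mono) (auto intro!: each[OF S T])
    also have "\<dots> = real (card (Gr N T)) * real (card (Gr N S)) * c" by (simp add: card_cartesian_product)
    also have "\<dots> \<le> (2 * real N + 1) ^ card T * (2 * real N + 1) ^ card S * c"
    proof -
      have "real (card (Gr N T)) \<le> (2 * real N + 1) ^ card T"
        proof -
          have "card (Gr N T) \<le> (2 * N + 1) ^ card T" by (rule Gr_card[OF PSsub(2)[OF T]])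
          hence "real (card (Gr N T)) \<le> real ((2 * N + 1) ^ card T)" by (simp only: of_nat_le_iff)
          thus ?thesis by (simp add: add.commute)
        qed
      moreover have "real (card (Gr N S)) \<le> (2 * real N + 1) ^ card S"
        proof -
          have "card (Gr N S) \<le> (2 * N + 1) ^ card S" by (rule Gr_card[OF PSsub(2)[OF S]])
          hence "real (card (Gr N S)) \<le> real ((2 * N + 1) ^ card S)" by (simp only: of_nat_le_iff)
          thus ?thesis by (simp add: add.commute)
        qed
      moreover have "c \<ge> 0" unfolding c_def r_def using Npos by simp
      ultimately show ?thesis by (intro mult_right_mono mult_mono) auto
    qed
    also have "\<dots> = r ^ card S * r ^ card T" unfolding c_def by (simp add: field_simps)
    finally show "(\<Sum>pq\<in>Gr N (snd st) \<times> Gr N (fst st). measure M (Bd (st, pq))) \<le> r ^ card (fst st) * r ^ card (snd st)"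
      unfolding stST by simp
  qed
  also have "\<dots> = (\<Sum>S\<in>PS. r ^ card S) * (\<Sum>T\<in>PS. r ^ card T)"
    by (simp add: sum_product sum.cartesian_product case_prod_beta)
  also have "\<dots> = ((1 + r) ^ N - 1)^2" unfolding PS_def sum_pow_card_ne by (simp add: power2_eq_square)
  finally have bad: "measure M Bad \<le> ((1 + r) ^ N - 1)^2" .
  have "measure M (space M - Bad) \<le> measure M Good"
    using incl Goodm by (intro finite_measure_mono) auto
  moreover have "measure M (space M - Bad) = 1 - measure M Bad" using Badm by (rule prob_compl)
  ultimately show ?thesis using bad unfolding Good_def r_def by simp
qed



lemma g_lim: "(\<lambda>N. ((1 + (2 * real N + 1) / real N ^ 5) ^ N - 1)^2) \<longlonglongrightarrow> 0"
proof -
  define a where "a N = (1 + (2 * real N + 1) / real N ^ 5) ^ N" for N :: nat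
  have "a \<longlonglongrightarrow> 1"
  proof (rule real_tendsto_sandwich[where f = "\<lambda>N. 1" and h = "\<lambda>N. exp (3 / real N)"])
    show "\<forall>\<^sub>F N in sequentially. 1 \<le> a N"
      by (intro always_eventually allI) (simp add: a_def one_le_power)
    show "\<forall>\<^sub>F N in sequentially. a N \<le> exp (3 / real N)"
    proof (rule eventually_sequentiallyI[of 1])
      fix N :: nat assume N: "1 \<le> N"
      define r where "r = (2 * real N + 1) / real N ^ 5"
      have r0: "r \<ge> 0" unfolding r_def by simp
      have "a N = (1 + r) ^ N" unfolding a_def r_def ..
      also have "\<dots> \<le> exp r ^ N" using r0 by (intro power_mono) auto
      also have "\<dots> = exp (real N * r)" by (simp add: exp_of_nat_mult)
      also have "real N * r \<le> 3 / real N"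
      proof -
        have Np: "real N \<ge> 1" using N by simp
        have "real N * r = (2 * real N + 1) / real N ^ 4" unfolding r_def using Np
          by (simp add: field_simps power_eq_if)
        also have "\<dots> \<le> (3 * real N ^ 3) / real N ^ 4"
        proof (rule divide_right_mono)
          have "real N \<le> real N ^ 3" using Np by (simp add: power_increasing[of 1 3 "real N", simplified])
          thus "2 * real N + 1 \<le> 3 * real N ^ 3" using Np by linarith
        qed simp
        also have "\<dots> = 3 / real N" using Np by (simp add: field_simps power_eq_if)
        finally show ?thesis .
      qed
      hence "exp (real N * r) \<le> exp (3 / real N)" by simp
      finally show "a N \<le> exp (3 / real N)" .
    qed
    show "(\<lambda>N. 1) \<longlonglongrightarrow> (1::real)" by simp
    have "(\<lambda>N. exp (3 / real N)) \<longlonglongrightarrow> exp 0"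
      by (intro tendsto_exp lim_const_over_n)
    thus "(\<lambda>N. exp (3 / real N)) \<longlonglongrightarrow> 1" by simp
  qed
  hence "(\<lambda>N. (a N - 1)^2) \<longlonglongrightarrow> (1 - 1)^2" by (intro tendsto_intros)
  thus ?thesis unfolding a_def by simp
qed

theorem mainTheorem8:
  fixes M :: "nat \<Rightarrow> (nat \<times> nat \<Rightarrow> real) measure"
  assumes "\<And>N. haar_orthogonal N (M N)"
  shows "(\<lambda>N. measure (M N) {U \<in> space (M N). \<forall>S T. S \<subseteq> {..<N} \<and> T \<subseteq> {..<N} \<and> S \<noteq> {} \<and> T \<noteq> {} \<longrightarrow>
            sub_opnorm U S T < sqrt (100 * (real (card S) + real (card T)) * ln (real N) / real N)})
         \<longlonglongrightarrow> 1"
proof (rule real_tendsto_sandwich[where f = "\<lambda>N. 1 - ((1 + (2 * real N + 1) / real N ^ 5) ^ N - 1)^2" and h = "\<lambda>N. 1"])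
  show "\<forall>\<^sub>F N in sequentially. 1 - ((1 + (2 * real N + 1) / real N ^ 5) ^ N - 1)^2 \<le>
     measure (M N) {U \<in> space (M N). \<forall>S T. S \<subseteq> {..<N} \<and> T \<subseteq> {..<N} \<and> S \<noteq> {} \<and> T \<noteq> {} \<longrightarrow>
            sub_opnorm U S T < sqrt (100 * (real (card S) + real (card T)) * ln (real N) / real N)}"
    by (rule eventually_sequentiallyI[of 16]) (rule main_bound[OF assms])
  show "\<forall>\<^sub>F N in sequentially. measure (M N) {U \<in> space (M N). \<forall>S T. S \<subseteq> {..<N} \<and> T \<subseteq> {..<N} \<and> S \<noteq> {} \<and> T \<noteq> {} \<longrightarrow>
            sub_opnorm U S T < sqrt (100 * (real (card S) + real (card T)) * ln (real N) / real N)} \<le> 1"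
  proof (intro always_eventually allI)
    fix N
    interpret prob_space "M N" using assms by (rule haar_prob)
    show "measure (M N) {U \<in> space (M N). \<forall>S T. S \<subseteq> {..<N} \<and> T \<subseteq> {..<N} \<and> S \<noteq> {} \<and> T \<noteq> {} \<longrightarrow>
            sub_opnorm U S T < sqrt (100 * (real (card S) + real (card T)) * ln (real N) / real N)} \<le> 1"
      by (rule prob_le_1)
  qed
  show "(\<lambda>N. 1 - ((1 + (2 * real N + 1) / real N ^ 5) ^ N - 1)^2) \<longlonglongrightarrow> 1"
    using tendsto_diff[OF tendsto_const g_lim, of 1] by simp
  show "(\<lambda>N. 1) \<longlonglongrightarrow> (1::real)" by simp
qed

end
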